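(* Let $\langle A, \leq, \otimes, \ominus, \mathbf{1}\rangle$ be a residuated partially ordered monoid with bottom element $\bot$. Let $Lex_\omega(A) = I(A)^\omega \cup I(A)^\ast A \{\bot\}^\omega$, with componentwise operation $\otimes^\omega$, identity $\mathbf{1}^\omega$, and order $a \leq_\omega b$ iff $a_{\leq k} \leq_k b_{\leq k}$ for all $k\geq1$. Then $\langle Lex_\omega(A), \leq_\omega, \otimes^\omega, \ominus_\omega, \mathbf{1}^\omega\rangle$ is a residuated partially ordered monoid, where for $a,b\in Lex_\omega(A)$: $$a \ominus_\omega b = \begin{cases} (a_1 \ominus b_1) \ldots (a_k \ominus b_k) \ldots & \text{if } \infty = \gamma(a,b) = \delta(a,b),\\ (a_1 \ominus b_1) \ldots (a_{\gamma(a,b)} \ominus b_{\gamma(a,b)})\,\bot^\omega & \text{if } \infty \neq \gamma(a,b) \leq \delta(a,b),\\ (a_1 \ominus b_1) \ldots (a_{\delta(a,b)} \ominus b_{\delta(a,b)})\,\big(\bigvee Lex_\omega(A)\big) & \text{otherwise.}\end{cases}$$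
   Context: A residuated partially ordered monoid $\langle A, \leq, \otimes, \ominus, \mathbf{1}\rangle$ consists of a partial order $\langle A,\leq\rangle$, a commutative monoid $\langle A,\otimes,\mathbf{1}\rangle$, and a binary operation $\ominus$ with $b \otimes c \leq a$ iff $c \leq a \ominus b$ for all $a,b,c\in A$. $a<b$ means $a\leq b$, $a\neq b$. $I(A) = \{c \in A \mid \forall a,b \in A.\ a \otimes c = b \otimes c \Rightarrow a = b\}$, $C(A)=A\setminus I(A)$. $I(A)^\omega$: infinite sequences over $I(A)$; $I(A)^\ast A\{\bot\}^\omega$: infinite sequences consisting of a finite (possibly empty) sequence over $I(A)$, then one element of $A$, then infinitely many $\bot$. $a_{\leq k}$ is the length-$k$ prefix $a_1\ldots a_k$. The order $\leq_k$ on $A^k$: $\leq_1=\leq$, and for $k\geq2$, $a_1 \ldots a_k \leq_k b_1 \ldots b_k$ iff $a_1 < b_1$, or $a_1 = b_1$ and $a_2 \ldots a_k \leq_{k-1} b_2 \ldots b_k$. $\bot^\omega$ is the constant sequence $\bot\bot\ldots$; $\bigvee Lex_\omega(A)$ is the greatest element of $Lex_\omega(A)$ w.r.t. $\leq_\omega$; in the third case the result is the finite prefix followed by that infinite sequence. For $a,b\in Lex_\omega(A)$: $\gamma(a,b) = \min\{ i \mid a_i \ominus b_i \in C(A)\}$ and $\delta(a,b) = \min\{ i \mid (a_i \ominus b_i) \otimes b_i < a_i\}$, each equal to $\infty$ if the set is empty. *)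

theory Defs
  imports "HOL-Library.Extended_Nat"
begin

definition residuated_pom ::
  "'a set \<Rightarrow> ('a \<Rightarrow> 'a \<Rightarrow> bool) \<Rightarrow> ('a \<Rightarrow> 'a \<Rightarrow> 'a) \<Rightarrow> ('a \<Rightarrow> 'a \<Rightarrow> 'a) \<Rightarrow> 'a \<Rightarrow> bool" where
  "residuated_pom S le mult res one \<longleftrightarrow>
     (\<forall>a\<in>S. le a a) \<and>
     (\<forall>a\<in>S. \<forall>b\<in>S. le a b \<and> le b a \<longrightarrow> a = b) \<and>
     (\<forall>a\<in>S. \<forall>b\<in>S. \<forall>c\<in>S. le a b \<and> le b c \<longrightarrow> le a c) \<and>
     one \<in> S \<and>
     (\<forall>a\<in>S. \<forall>b\<in>S. mult a b \<in> S) \<and>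
     (\<forall>a\<in>S. \<forall>b\<in>S. res a b \<in> S) \<and>
     (\<forall>a\<in>S. \<forall>b\<in>S. \<forall>c\<in>S. mult (mult a b) c = mult a (mult b c)) \<and>
     (\<forall>a\<in>S. \<forall>b\<in>S. mult a b = mult b a) \<and>
     (\<forall>a\<in>S. mult a one = a) \<and>
     (\<forall>a\<in>S. \<forall>b\<in>S. \<forall>c\<in>S. le (mult b c) a \<longleftrightarrow> le c (res a b))"

definition Icanc :: "('a \<Rightarrow> 'a \<Rightarrow> 'a) \<Rightarrow> 'a set" where
  "Icanc mult = {c. \<forall>a b. mult a c = mult b c \<longrightarrow> a = b}"

definition Ccanc :: "('a \<Rightarrow> 'a \<Rightarrow> 'a) \<Rightarrow> 'a set" where
  "Ccanc mult = UNIV - Icanc mult"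

text \<open>Sequences are 0-indexed: the paper's a_{i} is (a (i-1)).
  Lex_omega(A) = I(A)^omega \<union> I(A)^* A {bt}^omega.\<close>
definition Lex_omega :: "('a \<Rightarrow> 'a \<Rightarrow> 'a) \<Rightarrow> 'a \<Rightarrow> (nat \<Rightarrow> 'a) set" where
  "Lex_omega mult bt =
     {s. (\<forall>i. s i \<in> Icanc mult) \<or>
         (\<exists>n. (\<forall>i<n. s i \<in> Icanc mult) \<and> (\<forall>i>n. s i = bt))}"

definition strict :: "('a \<Rightarrow> 'a \<Rightarrow> bool) \<Rightarrow> 'a \<Rightarrow> 'a \<Rightarrow> bool" where
  "strict le x y \<longleftrightarrow> le x y \<and> x \<noteq> y"

fun lex_k :: "('a \<Rightarrow> 'a \<Rightarrow> bool) \<Rightarrow> nat \<Rightarrow> (nat \<Rightarrow> 'a) \<Rightarrow> (nat \<Rightarrow> 'a) \<Rightarrow> bool" where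
  "lex_k le 0 a b = True"
| "lex_k le (Suc 0) a b = le (a 0) (b 0)"
| "lex_k le (Suc (Suc k)) a b =
     (strict le (a 0) (b 0) \<or>
      (a 0 = b 0 \<and> lex_k le (Suc k) (\<lambda>i. a (Suc i)) (\<lambda>i. b (Suc i))))"

definition lex_omega_le :: "('a \<Rightarrow> 'a \<Rightarrow> bool) \<Rightarrow> (nat \<Rightarrow> 'a) \<Rightarrow> (nat \<Rightarrow> 'a) \<Rightarrow> bool" where
  "lex_omega_le le a b \<longleftrightarrow> (\<forall>k\<ge>1. lex_k le k a b)"

text \<open>gamma and delta, as 1-based indices (infinity if the set is empty).\<close>
definition gamma :: "('a \<Rightarrow> 'a \<Rightarrow> 'a) \<Rightarrow> ('a \<Rightarrow> 'a \<Rightarrow> 'a) \<Rightarrow> (nat \<Rightarrow> 'a) \<Rightarrow> (nat \<Rightarrow> 'a) \<Rightarrow> enat" where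
  "gamma mult res a b =
     (if \<exists>i. res (a i) (b i) \<in> Ccanc mult
      then enat (Suc (LEAST i. res (a i) (b i) \<in> Ccanc mult)) else \<infinity>)"

definition delta :: "('a \<Rightarrow> 'a \<Rightarrow> bool) \<Rightarrow> ('a \<Rightarrow> 'a \<Rightarrow> 'a) \<Rightarrow> ('a \<Rightarrow> 'a \<Rightarrow> 'a) \<Rightarrow> (nat \<Rightarrow> 'a) \<Rightarrow> (nat \<Rightarrow> 'a) \<Rightarrow> enat" where
  "delta le mult res a b =
     (if \<exists>i. strict le (mult (res (a i) (b i)) (b i)) (a i)
      then enat (Suc (LEAST i. strict le (mult (res (a i) (b i)) (b i)) (a i))) else \<infinity>)"

definition lex_top :: "('a \<Rightarrow> 'a \<Rightarrow> bool) \<Rightarrow> ('a \<Rightarrow> 'a \<Rightarrow> 'a) \<Rightarrow> 'a \<Rightarrow> nat \<Rightarrow> 'a" where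
  "lex_top le mult bt =
     (THE g. g \<in> Lex_omega mult bt \<and> (\<forall>x\<in>Lex_omega mult bt. lex_omega_le le x g))"

definition res_omega ::
  "('a \<Rightarrow> 'a \<Rightarrow> bool) \<Rightarrow> ('a \<Rightarrow> 'a \<Rightarrow> 'a) \<Rightarrow> ('a \<Rightarrow> 'a \<Rightarrow> 'a) \<Rightarrow> 'a \<Rightarrow>
   (nat \<Rightarrow> 'a) \<Rightarrow> (nat \<Rightarrow> 'a) \<Rightarrow> nat \<Rightarrow> 'a" where
  "res_omega le mult res bt a b =
     (let g = gamma mult res a b; d = delta le mult res a b in
      if g = \<infinity> \<and> d = \<infinity> then (\<lambda>i. res (a i) (b i))
      else if g \<noteq> \<infinity> \<and> g \<le> d then (\<lambda>i. if enat i < g then res (a i) (b i) else bt)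
      else (\<lambda>i. if enat i < d then res (a i) (b i)
                 else lex_top le mult bt (i - the_enat d)))"

end

theory Submission
  imports Defs
begin

definition lexf :: "('a \<Rightarrow> 'a \<Rightarrow> bool) \<Rightarrow> (nat \<Rightarrow> 'a) \<Rightarrow> (nat \<Rightarrow> 'a) \<Rightarrow> bool" where
  "lexf le x y \<longleftrightarrow> (\<forall>j. (\<forall>i<j. x i = y i) \<longrightarrow> le (x j) (y j))"

lemma lex_k_Suc:
  "lex_k le (Suc k) a b \<longleftrightarrow>
    ((\<exists>j<k. (\<forall>i<j. a i = b i) \<and> strict le (a j) (b j)) \<or> ((\<forall>i<k. a i = b i) \<and> le (a k) (b k)))"
proof (induction k arbitrary: a b)
  case 0 then show ?case by simp
next
  case (Suc k)
  show ?case
    apply (simp only: lex_k.simps Suc.IH All_less_Suc2 Ex_less_Suc2)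
    apply (auto simp: strict_def)
    done
qed

lemma lex_omega_le_lexf:
  assumes rf: "\<And>x. le x x"
  shows "lex_omega_le le a b \<longleftrightarrow> lexf le a b"
proof
  assume H: "lex_omega_le le a b"
  show "lexf le a b" unfolding lexf_def
  proof (intro allI impI)
    fix j assume E: "\<forall>i<j. a i = b i"
    from H have "lex_k le (Suc j) a b" unfolding lex_omega_le_def by simp
    then show "le (a j) (b j)" using E unfolding lex_k_Suc strict_def by auto
  qed
next
  assume H: "lexf le a b"
  show "lex_omega_le le a b" unfolding lex_omega_le_def
  proof (intro allI impI)
    fix k :: nat assume "k \<ge> 1"
    then obtain k' where k: "k = Suc k'" by (cases k) auto
    show "lex_k le k a b"
    proof (cases "\<forall>i<k'. a i = b i")
      case True then show ?thesis using H unfolding k lex_k_Suc lexf_def by blast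
    next
      case False
      then obtain i where i: "i < k'" "a i \<noteq> b i" by blast
      define j where "j = (LEAST i. a i \<noteq> b i)"
      have j1: "a j \<noteq> b j" unfolding j_def using i(2) by (rule LeastI[of "\<lambda>i. a i \<noteq> b i"])
      have "j \<le> i" unfolding j_def by (rule Least_le) (fact i(2))
      have j2: "\<forall>i<j. a i = b i" unfolding j_def using not_less_Least by blast
      then have "le (a j) (b j)" using H unfolding lexf_def by blast
      then show ?thesis unfolding k lex_k_Suc strict_def using j1 j2 \<open>j \<le> i\<close> i(1)
        by (meson le_less_trans)
    qed
  qed
qed

lemma first_diff:
  fixes x y :: "nat \<Rightarrow> 'a"
  assumes "x \<noteq> y" shows "\<exists>k. (\<forall>i<k. x i = y i) \<and> x k \<noteq> y k"
proof -
  obtain i where i: "x i \<noteq> y i" using assms by auto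
  define k where "k = (LEAST i. x i \<noteq> y i)"
  have "x k \<noteq> y k" unfolding k_def using i by (rule LeastI[of "\<lambda>i. x i \<noteq> y i"])
  moreover have "\<forall>i<k. x i = y i" unfolding k_def using not_less_Least by blast
  ultimately show ?thesis by blast
qed


locale rpo =
  fixes le :: "'a \<Rightarrow> 'a \<Rightarrow> bool" and mult res :: "'a \<Rightarrow> 'a \<Rightarrow> 'a" and one bt :: 'a
  assumes RP: "residuated_pom UNIV le mult res one" and BT: "\<forall>x. le bt x"
begin

lemmas RPc = RP[unfolded residuated_pom_def]
lemma r_refl: "le x x" using RPc[THEN conjunct1] by simp
lemma r_antisym: "le x y \<Longrightarrow> le y x \<Longrightarrow> x = y" using RPc[THEN conjunct2, THEN conjunct1] by simp
lemma r_trans: "le x y \<Longrightarrow> le y z \<Longrightarrow> le x z" using RPc[THEN conjunct2, THEN conjunct2, THEN conjunct1] by blast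
lemma m_assoc: "mult (mult x y) z = mult x (mult y z)" using RPc[THEN conjunct2, THEN conjunct2, THEN conjunct2, THEN conjunct2, THEN conjunct2, THEN conjunct2, THEN conjunct1] by simp
lemma m_comm: "mult x y = mult y x" using RPc[THEN conjunct2, THEN conjunct2, THEN conjunct2, THEN conjunct2, THEN conjunct2, THEN conjunct2, THEN conjunct2, THEN conjunct1] by blast
lemma m_unit: "mult x one = x" using RPc[THEN conjunct2, THEN conjunct2, THEN conjunct2, THEN conjunct2, THEN conjunct2, THEN conjunct2, THEN conjunct2, THEN conjunct2, THEN conjunct1] by simp
lemma resid: "le (mult b c) a \<longleftrightarrow> le c (res a b)" using RPc[THEN conjunct2, THEN conjunct2, THEN conjunct2, THEN conjunct2, THEN conjunct2, THEN conjunct2, THEN conjunct2, THEN conjunct2, THEN conjunct2] by blast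
lemma bot: "le bt x" using BT by blast

lemma mono: "le x y \<Longrightarrow> le (mult z x) (mult z y)"
proof -
  assume "le x y"
  moreover have "le y (res (mult z y) z)" using r_refl[of "mult z y"] resid by blast
  ultimately have "le x (res (mult z y) z)" by (rule r_trans)
  then show ?thesis using resid by blast
qed

lemma mult_bt: "mult x bt = bt"
proof -
  have "le (mult x bt) bt" using resid bot by blast
  then show ?thesis using bot r_antisym by blast
qed

lemma mult_bt2: "mult bt x = bt"
  using mult_bt[of x] m_comm[of bt x] by simp

lemma le_top: "le x (res y bt)"
  using resid[of bt x y] mult_bt2 bot by simp

lemma mult_res_le: "le (mult b (res a b)) a"
  using resid r_refl by blast

abbreviation "Lex \<equiv> Lex_omega mult bt"
abbreviation "Ic \<equiv> Icanc mult"

lemma Ic_iff: "x \<in> Ic \<longleftrightarrow> (\<forall>a b. mult a x = mult b x \<longrightarrow> a = b)"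
  unfolding Icanc_def by simp

lemma I_mult: "x \<in> Ic \<Longrightarrow> y \<in> Ic \<Longrightarrow> mult x y \<in> Ic"
  unfolding Ic_iff by (metis m_assoc)

lemma one_I: "one \<in> Ic"
  unfolding Ic_iff by (simp add: m_unit)

lemma lex_tail: "s \<in> Lex \<Longrightarrow> s j \<notin> Ic \<Longrightarrow> j < i \<Longrightarrow> s i = bt"
proof -
  assume s: "s \<in> Lex" and j: "s j \<notin> Ic" and ji: "j < i"
  then obtain n where n: "\<forall>i<n. s i \<in> Ic" "\<forall>i>n. s i = bt" unfolding Lex_omega_def by blast
  have "\<not> j < n" using n(1) j by blast
  then show "s i = bt" using n(2) ji by simp
qed

lemma lex_shift: "s \<in> Lex \<Longrightarrow> (\<lambda>i. s (i + m)) \<in> Lex"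
proof -
  assume s: "s \<in> Lex"
  show ?thesis
  proof (cases "\<forall>i. s i \<in> Ic")
    case True then show ?thesis unfolding Lex_omega_def by simp
  next
    case False
    then obtain n where n: "\<forall>i<n. s i \<in> Ic" "\<forall>i>n. s i = bt" using s unfolding Lex_omega_def by blast
    have "\<forall>i<n - m. s (i + m) \<in> Ic" using n by simp
    moreover have "\<forall>i>n - m. s (i + m) = bt" using n by simp
    ultimately show ?thesis unfolding Lex_omega_def by blast
  qed
qed

lemma lex_mult: "a \<in> Lex \<Longrightarrow> b \<in> Lex \<Longrightarrow> (\<lambda>i. mult (a i) (b i)) \<in> Lex"
proof -
  assume a: "a \<in> Lex" and b: "b \<in> Lex"
  show ?thesis
  proof (cases "(\<forall>i. a i \<in> Ic) \<and> (\<forall>i. b i \<in> Ic)")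
    case True
    then have "\<forall>i. mult (a i) (b i) \<in> Ic" by (simp add: I_mult)
    then show ?thesis unfolding Lex_omega_def by blast
  next
    case False
    then obtain n where n: "\<forall>i<n. a i \<in> Ic \<and> b i \<in> Ic" "\<forall>i>n. a i = bt \<or> b i = bt"
    proof (cases "\<forall>i. a i \<in> Ic")
      case Ta: True
      then have "\<not> (\<forall>i. b i \<in> Ic)" using False by blast
      then obtain n where n: "\<forall>i<n. b i \<in> Ic" "\<forall>i>n. b i = bt" using b unfolding Lex_omega_def by blast
      show ?thesis using n Ta by (intro that[of n]) auto
    next
      case Fa: False
      then obtain n where n: "\<forall>i<n. a i \<in> Ic" "\<forall>i>n. a i = bt" using a unfolding Lex_omega_def by blast
      show ?thesis
      proof (cases "\<forall>i. b i \<in> Ic")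
        case True then show ?thesis using n by (intro that[of n]) auto
      next
        case False
        then obtain m where m: "\<forall>i<m. b i \<in> Ic" "\<forall>i>m. b i = bt" using b unfolding Lex_omega_def by blast
        show ?thesis using n m by (intro that[of "min n m"]) (auto simp: min_less_iff_disj)
      qed
    qed
    have "\<forall>i<n. mult (a i) (b i) \<in> Ic" using n(1) by (simp add: I_mult)
    moreover have "\<forall>i>n. mult (a i) (b i) = bt" using n(2) mult_bt mult_bt2 by metis
    ultimately show ?thesis unfolding Lex_omega_def by blast
  qed
qed

lemma lexf_refl: "lexf le x x" unfolding lexf_def by (simp add: r_refl)

lemma lexf_antisym: assumes "lexf le x y" "lexf le y x" shows "x = y"
proof (rule ccontr)
  assume "x \<noteq> y"
  then obtain k where "\<forall>i<k. x i = y i" "x k \<noteq> y k" using first_diff by blast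
  then show False using assms r_antisym unfolding lexf_def by (metis)
qed

lemma lexf_first: assumes "lexf le x y" "x \<noteq> y"
  shows "\<exists>k. (\<forall>i<k. x i = y i) \<and> x k \<noteq> y k \<and> le (x k) (y k)"
  using first_diff[OF assms(2)] assms(1) unfolding lexf_def by blast

lemma lexf_trans: assumes "lexf le x y" "lexf le y z" shows "lexf le x z"
proof (cases "x = y \<or> y = z")
  case True then show ?thesis using assms by auto
next
  case False
  then obtain p where p: "\<forall>i<p. x i = y i" "x p \<noteq> y p" "le (x p) (y p)" using lexf_first assms(1) by blast
  obtain q where q: "\<forall>i<q. y i = z i" "y q \<noteq> z q" "le (y q) (z q)" using lexf_first assms(2) False by blast
  show ?thesis unfolding lexf_def
  proof (intro allI impI)
    fix j assume J: "\<forall>i<j. x i = z i"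
    consider "j < p" "j < q" | "p < q" "p \<le> j" | "p = q" "p \<le> j" | "q < p" "q \<le> j" by linarith
    then show "le (x j) (z j)"
    proof cases
      case 1 then show ?thesis using p q r_refl by simp
    next
      case 2
      have "x p \<noteq> z p" using p q 2 by auto
      hence "j = p" using J 2 by (metis le_neq_implies_less)
      then show ?thesis using p q 2 by simp
    next
      case 3
      have "x p \<noteq> z p" using p q 3 r_antisym by metis
      hence "j = p" using J 3 by (metis le_neq_implies_less)
      then show ?thesis using p q 3 r_trans by metis
    next
      case 4
      have "x q \<noteq> z q" using p q 4 by auto
      hence "j = q" using J 4 by (metis le_neq_implies_less)
      then show ?thesis using p q 4 by simp
    qed
  qed
qed

lemma lexf_eq: "lex_omega_le le = lexf le"
  using lex_omega_le_lexf[of le] r_refl by (intro ext) blast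

definition topc :: "nat \<Rightarrow> 'a" where
  "topc = (if res bt bt \<in> Ic then (\<lambda>_. res bt bt) else (\<lambda>i. if i = 0 then res bt bt else bt))"

lemma topc_Lex: "topc \<in> Lex"
  unfolding topc_def Lex_omega_def by (auto intro: exI[of _ 0])

lemma topc_great: "x \<in> Lex \<Longrightarrow> lexf le x topc"
proof -
  assume x: "x \<in> Lex"
  show ?thesis
  proof (cases "res bt bt \<in> Ic")
    case True then show ?thesis unfolding topc_def lexf_def by (simp add: le_top)
  next
    case False
    show ?thesis unfolding lexf_def
    proof (intro allI impI)
      fix j assume J: "\<forall>i<j. x i = topc i"
      show "le (x j) (topc j)"
      proof (cases "j = 0")
        case True then show ?thesis using False unfolding topc_def by (simp add: le_top)
      next
        case F2: False
        then have "x 0 = res bt bt" using J False unfolding topc_def by auto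
        then have "x j = bt" using lex_tail[OF x, of 0 j] False F2 by simp
        then show ?thesis by (simp add: bot)
      qed
    qed
  qed
qed

lemma lex_top_props: "lex_top le mult bt \<in> Lex \<and> (\<forall>x\<in>Lex. lexf le x (lex_top le mult bt))"
proof -
  have "\<exists>!g. g \<in> Lex \<and> (\<forall>x\<in>Lex. lex_omega_le le x g)"
    unfolding lexf_eq
    using topc_Lex topc_great lexf_antisym by (intro ex1I[of _ topc]) auto
  from theI'[OF this] show ?thesis unfolding lex_top_def lexf_eq .
qed

end

context rpo
begin

lemma strict_iff: "strict le (mult (res x y) y) x \<longleftrightarrow> mult y (res x y) \<noteq> x"
  unfolding strict_def using mult_res_le[of y x] m_comm[of y "res x y"] by auto

lemma Ccanc_iff: "z \<in> Ccanc mult \<longleftrightarrow> z \<notin> Ic"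
  unfolding Ccanc_def by simp

lemma res_omega_cases:
  fixes a b :: "nat \<Rightarrow> 'a"
  obtains (C1) "\<forall>i. res (a i) (b i) \<in> Ic" "\<forall>i. mult (b i) (res (a i) (b i)) = a i"
      "res_omega le mult res bt a b = (\<lambda>i. res (a i) (b i))"
   | (C2) g where "res (a g) (b g) \<notin> Ic" "\<forall>i<g. res (a i) (b i) \<in> Ic"
      "\<forall>i<g. mult (b i) (res (a i) (b i)) = a i"
      "res_omega le mult res bt a b = (\<lambda>i. if i \<le> g then res (a i) (b i) else bt)"
   | (C3) d where "mult (b d) (res (a d) (b d)) \<noteq> a d" "\<forall>i\<le>d. res (a i) (b i) \<in> Ic"
      "\<forall>i<d. mult (b i) (res (a i) (b i)) = a i"
      "res_omega le mult res bt a b = (\<lambda>i. if i \<le> d then res (a i) (b i) else lex_top le mult bt (i - Suc d))"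
proof -
  define P where "P = (\<lambda>i. res (a i) (b i) \<notin> Ic)"
  define Q where "Q = (\<lambda>i. mult (b i) (res (a i) (b i)) \<noteq> a i)"
  have G: "gamma mult res a b = (if \<exists>i. P i then enat (Suc (LEAST i. P i)) else \<infinity>)"
    unfolding gamma_def P_def Ccanc_iff ..
  have D: "delta le mult res a b = (if \<exists>i. Q i then enat (Suc (LEAST i. Q i)) else \<infinity>)"
    unfolding delta_def Q_def strict_iff ..
  define g where "g = (LEAST i. P i)"
  define d where "d = (LEAST i. Q i)"
  have gl: "\<forall>i<g. \<not> P i" unfolding g_def using not_less_Least by blast
  have dl: "\<forall>i<d. \<not> Q i" unfolding d_def using not_less_Least by blast
  consider (n) "\<not> (\<exists>i. P i)" "\<not> (\<exists>i. Q i)" | (p) "\<exists>i. P i" "\<not> (\<exists>i. Q i) \<or> g \<le> d"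
    | (q) "\<exists>i. Q i" "\<not> (\<exists>i. P i) \<or> d < g" by (metis not_le)
  then show ?thesis
  proof cases
    case n
    then show ?thesis using C1 unfolding res_omega_def G D Let_def P_def Q_def by auto
  next
    case p
    have Pg: "P g" unfolding g_def using p(1) by (metis LeastI)
    have Qg: "\<forall>i<g. \<not> Q i" using p(2) dl by auto
    have "res_omega le mult res bt a b = (\<lambda>i. if i \<le> g then res (a i) (b i) else bt)"
      unfolding res_omega_def G D Let_def using p(1) p(2) by (auto simp: g_def[symmetric] d_def[symmetric])
    then show ?thesis using C2[of g] Pg Qg gl unfolding P_def Q_def by auto
  next
    case q
    have Qd: "Q d" unfolding d_def using q(1) by (metis LeastI)
    have Pd: "\<forall>i\<le>d. \<not> P i" using q(2) gl by auto
    have "res_omega le mult res bt a b = (\<lambda>i. if i \<le> d then res (a i) (b i) else lex_top le mult bt (i - Suc d))"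
      unfolding res_omega_def G D Let_def using q(1) q(2) by (auto simp: g_def[symmetric] d_def[symmetric])
    then show ?thesis using C3[of d] Qd Pd dl unfolding P_def Q_def by auto
  qed
qed


lemma back_step:
  assumes b: "b \<in> Lex" and kj: "k < j" and e: "mult (b k) (c k) = a k"
    and l: "le (c k) (res (a k) (b k))" and ne: "c k \<noteq> res (a k) (b k)"
  shows "le (c j) (res (a j) (b j))"
proof (cases "b k \<in> Ic")
  case True
  have 1: "le (mult (b k) (res (a k) (b k))) (a k)" by (rule mult_res_le)
  have 2: "le (mult (b k) (c k)) (mult (b k) (res (a k) (b k)))" using mono l by blast
  have "mult (b k) (c k) = mult (b k) (res (a k) (b k))" using 1 2 e r_antisym by metis
  then have "mult (c k) (b k) = mult (res (a k) (b k)) (b k)" using m_comm by metis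
  then have "c k = res (a k) (b k)" using True unfolding Ic_iff by blast
  then show ?thesis using ne by blast
next
  case False
  have "b j = bt" by (rule lex_tail[OF b False kj])
  then show ?thesis by (simp add: le_top)
qed

lemma res_lex: "res_omega le mult res bt a b \<in> Lex"
proof -
  from res_omega_cases[of a b] show ?thesis
  proof cases
    case C1 then show ?thesis unfolding Lex_omega_def by simp
  next
    case (C2 g)
    have "\<forall>i<g. res_omega le mult res bt a b i \<in> Ic" using C2 by simp
    moreover have "\<forall>i>g. res_omega le mult res bt a b i = bt" using C2 by simp
    ultimately show ?thesis unfolding Lex_omega_def by blast
  next
    case (C3 d)
    define T where "T = lex_top le mult bt"
    have T: "T \<in> Lex" using lex_top_props unfolding T_def by blast
    show ?thesis
    proof (cases "\<forall>i. T i \<in> Ic")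
      case True
      then have "\<forall>i. res_omega le mult res bt a b i \<in> Ic" using C3 unfolding T_def[symmetric] by simp
      then show ?thesis unfolding Lex_omega_def by blast
    next
      case False
      then obtain n where n: "\<forall>i<n. T i \<in> Ic" "\<forall>i>n. T i = bt" using T unfolding Lex_omega_def by blast
      have "\<forall>i<n + Suc d. res_omega le mult res bt a b i \<in> Ic" using C3 n unfolding T_def[symmetric] by auto
      moreover have "\<forall>i>n + Suc d. res_omega le mult res bt a b i = bt" using C3 n unfolding T_def[symmetric] by auto
      ultimately show ?thesis unfolding Lex_omega_def by blast
    qed
  qed
qed

lemma resid_lex:
  assumes a: "a \<in> Lex" and b: "b \<in> Lex" and c: "c \<in> Lex"
  shows "lexf le (\<lambda>i. mult (b i) (c i)) a \<longleftrightarrow> lexf le c (res_omega le mult res bt a b)"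
proof -
  define R where "R = res_omega le mult res bt a b"
  have key: "lexf le (\<lambda>i. mult (b i) (c i)) a \<longleftrightarrow>
     (\<forall>j. (\<forall>i<j. mult (b i) (c i) = a i) \<longrightarrow> le (c j) (res (a j) (b j)))"
    unfolding lexf_def resid ..
  show ?thesis unfolding R_def[symmetric]
  proof
    assume H: "lexf le c R"
    show "lexf le (\<lambda>i. mult (b i) (c i)) a" unfolding key
    proof (intro allI impI)
      fix j assume A: "\<forall>i<j. mult (b i) (c i) = a i"
      show "le (c j) (res (a j) (b j))"
      proof (cases "\<forall>i\<le>j. c i = R i")
        case True
        from res_omega_cases[of a b] show ?thesis
        proof cases
          case C1 then show ?thesis using True r_refl unfolding R_def by simp
        next
          case (C2 g)
          show ?thesis
          proof (cases "j \<le> g")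
            case True2: True then show ?thesis using C2 True r_refl unfolding R_def by simp
          next
            case False then show ?thesis using C2 True bot unfolding R_def by simp
          qed
        next
          case (C3 d)
          show ?thesis
          proof (cases "j \<le> d")
            case True2: True then show ?thesis using C3 True r_refl unfolding R_def by simp
          next
            case False
            then have "c d = res (a d) (b d)" using C3 True unfolding R_def by simp
            moreover have "mult (b d) (c d) = a d" using A False by simp
            ultimately show ?thesis using C3(1) by simp
          qed
        qed
      next
        case False
        then have "c \<noteq> R" by blast
        then obtain k where k: "\<forall>i<k. c i = R i" "c k \<noteq> R k" using first_diff by blast
        have kj: "k \<le> j" using False k(1) by (meson le_trans not_le_imp_less)
        have lk: "le (c k) (R k)" using H k(1) unfolding lexf_def by blast
        have Rk: "R k = res (a k) (b k)"
        proof -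
          from res_omega_cases[of a b] show ?thesis
          proof cases
            case C1 then show ?thesis unfolding R_def by simp
          next
            case (C2 g)
            show ?thesis
            proof (cases "k \<le> g")
              case True then show ?thesis using C2 unfolding R_def by simp
            next
              case False
              then have "R k = bt" using C2 unfolding R_def by simp
              then have "c k = bt" using lk bot r_antisym by metis
              then show ?thesis using k(2) \<open>R k = bt\<close> by simp
            qed
          next
            case (C3 d)
            show ?thesis
            proof (cases "k \<le> d")
              case True then show ?thesis using C3 unfolding R_def by simp
            next
              case False
              then have "c d = res (a d) (b d)" using C3 k(1) unfolding R_def by simp
              moreover have "mult (b d) (c d) = a d" using A False kj by simp
              ultimately show ?thesis using C3(1) by simp
            qed
          qed
        qed
        show ?thesis
        proof (cases "k = j")
          case True then show ?thesis using lk Rk by simp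
        next
          case False
          then have "k < j" using kj by simp
          then show ?thesis using back_step[OF b \<open>k < j\<close>] A lk Rk k(2) by simp
        qed
      qed
    qed
  next
    assume H: "lexf le (\<lambda>i. mult (b i) (c i)) a"
    then have H': "\<And>j. (\<forall>i<j. mult (b i) (c i) = a i) \<Longrightarrow> le (c j) (res (a j) (b j))"
      using key by blast
    show "lexf le c R" unfolding lexf_def
    proof (intro allI impI)
      fix j assume B: "\<forall>i<j. c i = R i"
      have aux: "le (c j) (res (a j) (b j))" if "\<forall>i<j. R i = res (a i) (b i) \<and> mult (b i) (res (a i) (b i)) = a i"
        using H' B that by simp
      from res_omega_cases[of a b] show "le (c j) (R j)"
      proof cases
        case C1 then show ?thesis using aux unfolding R_def by simp
      next
        case (C2 g)
        show ?thesis
        proof (cases "j \<le> g")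
          case True then show ?thesis using aux C2 unfolding R_def by simp
        next
          case False
          then have "c g = res (a g) (b g)" using B C2 unfolding R_def by simp
          then have "c j = bt" using lex_tail[OF c, of g j] C2(1) False by simp
          then show ?thesis by (simp add: bot)
        qed
      next
        case (C3 d)
        show ?thesis
        proof (cases "j \<le> d")
          case True then show ?thesis using aux C3 unfolding R_def by simp
        next
          case False
          define T where "T = lex_top le mult bt"
          define c' where "c' = (\<lambda>i. c (i + Suc d))"
          have c': "c' \<in> Lex" unfolding c'_def by (rule lex_shift[OF c])
          have lt: "lexf le c' T" using lex_top_props c' unfolding T_def by blast
          have ag: "\<forall>i<j - Suc d. c' i = T i"
          proof (intro allI impI)
            fix i assume "i < j - Suc d"
            then have "i + Suc d < j" by simp
            then have "c (i + Suc d) = R (i + Suc d)" using B by blast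
            then show "c' i = T i" unfolding c'_def T_def R_def C3(4) by simp
          qed
          have "le (c' (j - Suc d)) (T (j - Suc d))" using lt ag unfolding lexf_def by blast
          then show ?thesis using False unfolding c'_def T_def R_def C3(4) by simp
        qed
      qed
    qed
  qed
qed

end

theorem proposition7:
  fixes le :: "'a \<Rightarrow> 'a \<Rightarrow> bool"
    and mult res :: "'a \<Rightarrow> 'a \<Rightarrow> 'a"
    and one bt :: 'a
  assumes "residuated_pom UNIV le mult res one"
    and "\<forall>x. le bt x"
  shows "residuated_pom (Lex_omega mult bt) (lex_omega_le le)
           (\<lambda>a b i. mult (a i) (b i)) (res_omega le mult res bt) (\<lambda>_. one)"
proof -
  interpret rpo le mult res one bt using assms by unfold_locales
  have oneL: "(\<lambda>_. one) \<in> Lex_omega mult bt" unfolding Lex_omega_def using one_I by simp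
  show ?thesis unfolding residuated_pom_def lexf_eq
  proof (intro conjI ballI allI impI)
    show "(\<lambda>_. one) \<in> Lex_omega mult bt" by (rule oneL)
  next
    fix a assume "a \<in> Lex_omega mult bt" show "lexf le a a" by (rule lexf_refl)
  qed (auto simp: lexf_refl resid_lex intro: lexf_antisym lexf_trans lex_mult res_lex m_assoc m_comm m_unit)
qed

end
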